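(* Let $\mathbf{H}\in\mathbb{R}^{m\times n}$ have full column rank, with rows indexed by sensors and columns by state variables. Let $\mathcal{S}_o\subseteq\{1,\dots,m\}$, let $\mathbf{H}_o$ be the submatrix of $\mathbf{H}$ consisting of the rows indexed by $\mathcal{S}_o$, and let $\mathcal{X}_o$ be the set of indices of the nonzero columns of $\mathbf{H}_o$. Suppose that (i) the state variables in $\mathcal{X}_o$ are observable with respect to $\mathcal{S}_o$; (ii) $\mathcal{C}\subseteq\mathcal{S}_o$ is a critical set with respect to $(\mathcal{S}_o,\mathcal{X}_o)$; (iii) the submatrix of $\mathbf{H}$ obtained by removing the rows indexed by $\mathcal{C}$ does not have full column rank. Let $\mathbf{U}_o\in\mathbb{R}^{|\mathcal{S}_o|\times|\mathcal{X}_o|}$ be a matrix whose columns form a basis of $\mathcal{R}(\mathbf{H}_o)$, and let $\bar{\mathbf{U}}_o$ be the submatrix of $\mathbf{U}_o$ obtained by removing the rows corresponding to sensors in $\mathcal{C}$. Then: (1) $\mathcal{N}(\bar{\mathbf{U}}_o)$ has dimension one; (2) for any nonzero $\mathbf{v}\in\mathcal{N}(\bar{\mathbf{U}}_o)$, the vector $\mathbf{a}\in\mathbb{R}^m$ with $a_i$ equal to the entry of $\mathbf{U}_o\mathbf{v}$ corresponding to sensor $i$ for $i\in\mathcal{C}$ and $a_i=0$ for $i\notin\mathcal{C}$ is an unobservable attack, i.e., $\mathbf{a}\neq\mathbf{0}$ and $\mathbf{a}\in\mathcal{R}(\mathbf{H})$.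
   Context: Linearized model $\mathbf{z}=\mathbf{H}\mathbf{x}+\mathbf{e}$. For a sensor set $\mathcal{S}$ and set of state variables $\mathcal{X}$, let $\mathbf{H}_{\mathcal{S}}$ keep only the rows of $\mathbf{H}$ in $\mathcal{S}$; the variables in $\mathcal{X}$ are observable with respect to $\mathcal{S}$ if every vector in $\mathcal{N}(\mathbf{H}_{\mathcal{S}})$ vanishes on all coordinates in $\mathcal{X}$. When this holds, $\mathcal{C}\subseteq\mathcal{S}$ is a critical set with respect to $(\mathcal{S},\mathcal{X})$ if the variables in $\mathcal{X}$ are not observable with respect to $\mathcal{S}\setminus\mathcal{C}$ but are observable with respect to $\mathcal{S}\setminus\mathcal{C}'$ for every strict subset $\mathcal{C}'\subsetneq\mathcal{C}$. An attack adding $\mathbf{a}$ to the data is unobservable iff $\mathbf{a}\neq\mathbf{0}$ and $\mathbf{a}\in\mathcal{R}(\mathbf{H})$. *)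

theory Defs
  imports "HOL-Analysis.Analysis"
begin

text \<open>For a row set S, the row submatrix A_S is represented
implicitly: its null space is the set of x with (A x)_i = 0 for all i in S, and
its range is identified (via the coordinates indexed by S) with the vectors
(A x) restricted to S, padded with zeros outside S.\<close>

definition nullspace_rows :: "real^'n^'m \<Rightarrow> 'm set \<Rightarrow> (real^'n) set" where
  "nullspace_rows A S = {x. \<forall>i\<in>S. (A *v x) $ i = 0}"

definition restrict_rows :: "'m set \<Rightarrow> real^'m \<Rightarrow> real^'m" where
  "restrict_rows S y = (\<chi> i. if i \<in> S then y $ i else 0)"

definition range_rows :: "real^'n^'m \<Rightarrow> 'm set \<Rightarrow> (real^'m) set" where
  "range_rows A S = restrict_rows S ` range (\<lambda>x. A *v x)"

definition observable :: "real^'n^'m \<Rightarrow> 'm set \<Rightarrow> 'n set \<Rightarrow> bool" where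
  "observable H S X \<longleftrightarrow> (\<forall>x \<in> nullspace_rows H S. \<forall>j\<in>X. x $ j = 0)"

definition critical_set :: "real^'n^'m \<Rightarrow> 'm set \<Rightarrow> 'n set \<Rightarrow> 'm set \<Rightarrow> bool" where
  "critical_set H S X C \<longleftrightarrow> C \<subseteq> S \<and> observable H S X \<and> \<not> observable H (S - C) X
     \<and> (\<forall>C'. C' \<subset> C \<longrightarrow> observable H (S - C') X)"

definition nonzero_cols :: "real^'n^'m \<Rightarrow> 'm set \<Rightarrow> 'n set" where
  "nonzero_cols H S = {j. \<exists>i\<in>S. H $ i $ j \<noteq> 0}"

definition columns_basis_of_range :: "real^'k^'m \<Rightarrow> 'm set \<Rightarrow> real^'n^'m \<Rightarrow> bool" where
  "columns_basis_of_range U S H \<longleftrightarrow> range_rows U S = range_rows H S \<and> nullspace_rows U S = {0}"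

definition unobservable_attack :: "real^'n^'m \<Rightarrow> real^'m \<Rightarrow> bool" where
  "unobservable_attack H a \<longleftrightarrow> a \<noteq> 0 \<and> a \<in> range (\<lambda>x. H *v x)"

end

theory Submission
  imports Defs
begin

lemma key:
  fixes H :: "real^'n^'m" and So C :: "'m set"
  assumes crit: "critical_set H So (nonzero_cols H So) C"
    and z1: "\<forall>i\<in>So - C. (H *v x1) $ i = 0"
    and z2: "\<forall>i\<in>So - C. (H *v x2) $ i = 0"
    and nz: "restrict_rows So (H *v x1) \<noteq> 0"
  shows "\<exists>t. restrict_rows So (H *v x2) = t *\<^sub>R restrict_rows So (H *v x1)"
proof -
  from nz obtain c where cS: "c \<in> So" and c1: "(H *v x1) $ c \<noteq> 0"
    by (auto simp: vec_eq_iff restrict_rows_def split: if_splits)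
  have cC: "c \<in> C" using z1 cS c1 by blast
  define t where "t = (H *v x2) $ c / (H *v x1) $ c"
  define x where "x = x2 - t *\<^sub>R x1"
  have Hx: "H *v x = H *v x2 - t *\<^sub>R (H *v x1)"
    unfolding x_def by (simp add: matrix_vector_mult_diff_distrib matrix_vector_mult_scaleR)
  have "observable H (So - (C - {c})) (nonzero_cols H So)"
    using crit cC unfolding critical_set_def by auto
  moreover have "x \<in> nullspace_rows H (So - (C - {c}))"
    unfolding nullspace_rows_def
  proof (intro CollectI ballI)
    fix i assume i: "i \<in> So - (C - {c})"
    show "(H *v x) $ i = 0"
    proof (cases "i = c")
      case True thus ?thesis using c1 by (simp add: Hx t_def)
    next
      case False thus ?thesis using i z1 z2 by (simp add: Hx)
    qed
  qed
  ultimately have xz: "\<forall>j\<in>nonzero_cols H So. x $ j = 0" unfolding observable_def by blast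
  have "\<forall>i\<in>So. (H *v x) $ i = 0"
  proof
    fix i assume i: "i \<in> So"
    have "\<forall>j. H $ i $ j * x $ j = 0"
      using xz i unfolding nonzero_cols_def by auto
    thus "(H *v x) $ i = 0" by (simp add: matrix_vector_mult_def sum.neutral)
  qed
  hence "restrict_rows So (H *v x2) = t *\<^sub>R restrict_rows So (H *v x1)"
    by (auto simp: vec_eq_iff restrict_rows_def Hx)
  thus ?thesis by blast
qed

theorem corollary1:
  fixes H :: "real^'n^'m" and U :: "real^'k^'m" and So C :: "'m set"
  assumes "nullspace_rows H UNIV = {0}"
    and "observable H So (nonzero_cols H So)"
    and "critical_set H So (nonzero_cols H So) C"
    and "nullspace_rows H (UNIV - C) \<noteq> {0}"
    and "CARD('k) = card (nonzero_cols H So)"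
    and "columns_basis_of_range U So H"
  shows "dim (nullspace_rows U (So - C)) = 1 \<and>
    (\<forall>v \<in> nullspace_rows U (So - C). v \<noteq> 0 \<longrightarrow>
       unobservable_attack H (\<chi> i. if i \<in> C then (U *v v) $ i else 0))"
proof -
  note crit = assms(3)
  have CS: "C \<subseteq> So" using crit unfolding critical_set_def by auto
  have rng: "range_rows U So = range_rows H So" and inj: "nullspace_rows U So = {0}"
    using assms(6) unfolding columns_basis_of_range_def by auto
  obtain z where zN: "z \<in> nullspace_rows H (UNIV - C)" and z0: "z \<noteq> 0"
    using assms(4) nullspace_rows_def by fastforce
  have zC: "\<forall>i. i \<notin> C \<longrightarrow> (H *v z) $ i = 0" using zN unfolding nullspace_rows_def by auto
  have Hz0: "H *v z \<noteq> 0"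
  proof
    assume "H *v z = 0"
    hence "z \<in> nullspace_rows H UNIV" by (simp add: nullspace_rows_def)
    thus False using assms(1) z0 by auto
  qed
  have rz: "restrict_rows So (H *v z) = H *v z"
    using zC CS by (auto simp: vec_eq_iff restrict_rows_def)
  have "restrict_rows So (H *v z) \<in> range_rows U So" unfolding rng unfolding range_rows_def by auto
  then obtain v0 where v0: "restrict_rows So (U *v v0) = H *v z"
    unfolding range_rows_def rz by auto
  have uinj: "w = w'" if "restrict_rows So (U *v w) = restrict_rows So (U *v w')" for w w'
  proof -
    have "w - w' \<in> nullspace_rows U So"
      using that by (auto simp: nullspace_rows_def vec_eq_iff restrict_rows_def
          matrix_vector_mult_diff_distrib) metis
    thus ?thesis using inj by auto
  qed
  have v0N: "v0 \<in> nullspace_rows U (So - C)"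
    unfolding nullspace_rows_def
  proof (intro CollectI ballI)
    fix i assume "i \<in> So - C"
    thus "(U *v v0) $ i = 0" using zC arg_cong[OF v0, of "\<lambda>y. y $ i"]
      by (auto simp: restrict_rows_def)
  qed
  have v00: "v0 \<noteq> 0"
  proof
    assume "v0 = 0"
    hence "U *v v0 = 0" by simp
    hence "restrict_rows So (U *v v0) = 0" by (simp add: restrict_rows_def vec_eq_iff)
    thus False using v0 Hz0 by simp
  qed
  have mult: "\<exists>t. v = t *\<^sub>R v0 \<and> restrict_rows So (U *v v) = t *\<^sub>R (H *v z)"
    if vN: "v \<in> nullspace_rows U (So - C)" for v
  proof -
    have "restrict_rows So (U *v v) \<in> range_rows U So" unfolding range_rows_def by auto
    hence "restrict_rows So (U *v v) \<in> range_rows H So" using rng by simp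
    then obtain x where x: "restrict_rows So (U *v v) = restrict_rows So (H *v x)"
      unfolding range_rows_def by auto
    have xz: "\<forall>i\<in>So - C. (H *v x) $ i = 0"
    proof
      fix i assume i: "i \<in> So - C"
      thus "(H *v x) $ i = 0" using vN arg_cong[OF x, of "\<lambda>y. y $ i"]
        by (auto simp: restrict_rows_def nullspace_rows_def)
    qed
    have zz: "\<forall>i\<in>So - C. (H *v z) $ i = 0" using zC by auto
    obtain t where t: "restrict_rows So (H *v x) = t *\<^sub>R restrict_rows So (H *v z)"
      using key[OF crit zz xz] rz Hz0 by auto
    have e: "restrict_rows So (U *v v) = t *\<^sub>R (H *v z)" using x t rz by simp
    have "restrict_rows So (U *v v) = restrict_rows So (U *v (t *\<^sub>R v0))"
      using e v0 by (simp add: matrix_vector_mult_scaleR vec_eq_iff restrict_rows_def) metis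
    hence "v = t *\<^sub>R v0" by (rule uinj)
    thus ?thesis using e by blast
  qed
  have sub: "subspace (nullspace_rows U (So - C))"
    unfolding subspace_def nullspace_rows_def
    by (auto simp: matrix_vector_right_distrib matrix_vector_mult_scaleR)
  have "nullspace_rows U (So - C) = span {v0}"
  proof
    show "nullspace_rows U (So - C) \<subseteq> span {v0}"
      using mult by (auto simp: span_singleton)
    show "span {v0} \<subseteq> nullspace_rows U (So - C)"
      using sub v0N by (simp add: span_minimal)
  qed
  hence d: "dim (nullspace_rows U (So - C)) = 1"
    using v00 by (simp add: dim_span_eq_card_independent)
  have "unobservable_attack H (\<chi> i. if i \<in> C then (U *v v) $ i else 0)"
    if vN: "v \<in> nullspace_rows U (So - C)" and vnz: "v \<noteq> 0" for v
  proof -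
    obtain t where t: "v = t *\<^sub>R v0" and e: "restrict_rows So (U *v v) = t *\<^sub>R (H *v z)"
      using mult[OF vN] by blast
    have t0: "t \<noteq> 0" using t vnz by auto
    have a: "(\<chi> i. if i \<in> C then (U *v v) $ i else 0) = H *v (t *\<^sub>R z)"
    proof (subst vec_eq_iff, intro allI)
      fix i
      have "restrict_rows So (U *v v) $ i = t * (H *v z) $ i" using e by simp
      thus "(\<chi> i. if i \<in> C then (U *v v) $ i else 0) $ i = (H *v (t *\<^sub>R z)) $ i"
        using CS zC by (auto simp: restrict_rows_def matrix_vector_mult_scaleR)
    qed
    have "H *v (t *\<^sub>R z) \<noteq> 0" using t0 Hz0 by (simp add: matrix_vector_mult_scaleR)
    thus ?thesis unfolding unobservable_attack_def a by auto
  qed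
  with d show ?thesis by blast
qed

end
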